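(* Let $(X,d)$ be a compact metric space and $f_{1,\infty}=\{f_n\}_{n\ge1}$ a commutative sequence of continuous self-maps of $X$. The following are equivalent: (1) $(X,f_{1,\infty})$ is weakly mixing; (2) $(\mathcal{M}(X),\widetilde{f}_{1,\infty})$ is weakly mixing; (3) $(\mathcal{M}(X),\widetilde{f}_{1,\infty})$ is topologically transitive.
   Context: The family is commutative if $f_i\circ f_j=f_j\circ f_i$ for all $i,j$. Write $f_1^n=f_n\circ\cdots\circ f_1$. $\mathcal{M}(X)$ is the space of Borel probability measures on $X$ with the weak$^*$ topology, and $\widetilde{f}_1^n(\mu)(A)=\mu((f_1^n)^{-1}(A))$ for Borel $A$. A non-autonomous system $(Y,g_{1,\infty})$ is topologically transitive if for all non-empty open $U,V$ there is $n\in\mathbb{N}$ with $g_1^n(U)\cap V\ne\emptyset$, and weakly mixing if for all non-empty open $U_1,U_2,V_1,V_2$ there is $n\in\mathbb{N}$ with $g_1^n(U_i)\cap V_i\ne\emptyset$ for $i=1,2$. *)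

theory Defs
  imports "HOL-Analysis.Analysis" "HOL-Probability.Probability_Measure"
begin

text \<open>The composed maps f_1^n = f_n o ... o f_1 (f_1^0 = id); the sequence is indexed from 1,
  the value f 0 is irrelevant.\<close>
primrec comp_seq :: "(nat \<Rightarrow> 'a \<Rightarrow> 'a) \<Rightarrow> nat \<Rightarrow> 'a \<Rightarrow> 'a" where
  "comp_seq f 0 = id"
| "comp_seq f (Suc n) = f (Suc n) \<circ> comp_seq f n"

definition commutative_seq :: "(nat \<Rightarrow> 'a \<Rightarrow> 'a) \<Rightarrow> bool" where
  "commutative_seq f \<longleftrightarrow> (\<forall>i\<ge>1. \<forall>j\<ge>1. f i \<circ> f j = f j \<circ> f i)"

text \<open>Non-autonomous system on a topological space T, given via its composed maps G n = g_1^n.\<close>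
definition na_transitive :: "'b topology \<Rightarrow> (nat \<Rightarrow> 'b \<Rightarrow> 'b) \<Rightarrow> bool" where
  "na_transitive T G \<longleftrightarrow>
     (\<forall>U V. openin T U \<and> U \<noteq> {} \<and> openin T V \<and> V \<noteq> {} \<longrightarrow>
        (\<exists>n\<ge>1. G n ` U \<inter> V \<noteq> {}))"

definition na_weakly_mixing :: "'b topology \<Rightarrow> (nat \<Rightarrow> 'b \<Rightarrow> 'b) \<Rightarrow> bool" where
  "na_weakly_mixing T G \<longleftrightarrow>
     (\<forall>U1 U2 V1 V2. openin T U1 \<and> U1 \<noteq> {} \<and> openin T U2 \<and> U2 \<noteq> {} \<and>
        openin T V1 \<and> V1 \<noteq> {} \<and> openin T V2 \<and> V2 \<noteq> {} \<longrightarrow>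
        (\<exists>n\<ge>1. G n ` U1 \<inter> V1 \<noteq> {} \<and> G n ` U2 \<inter> V2 \<noteq> {}))"

definition prob_measures :: "'a::topological_space measure set" where
  "prob_measures = {M. sets M = sets borel \<and> prob_space M}"

definition weak_star_topology :: "'a::topological_space measure topology" where
  "weak_star_topology = topology_generated_by
     {{M \<in> prob_measures. (\<integral>x. g x \<partial>M) \<in> U} | (g :: 'a \<Rightarrow> real) U. continuous_on UNIV g \<and> open U}"

definition induced_comp :: "(nat \<Rightarrow> 'a::topological_space \<Rightarrow> 'a) \<Rightarrow> nat \<Rightarrow> 'a measure \<Rightarrow> 'a measure" where
  "induced_comp f n M = distr M borel (comp_seq f n)"

end

theory Submission
  imports Defs "HOL-Probability.Probability"
begin

lemma comp_seq_cont:
  assumes "\<And>n. n \<ge> 1 \<Longrightarrow> continuous_on UNIV (f n)"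
  shows "continuous_on UNIV (comp_seq f n)"
proof (induction n)
  case 0 then show ?case by (simp add: continuous_on_id)
next
  case (Suc n)
  have "continuous_on UNIV (f (Suc n))" using assms by simp
  then show ?case using Suc
    by (auto intro: continuous_on_compose2[of UNIV])
qed

lemma comp_seq_comm1:
  assumes "commutative_seq f" "i \<ge> 1"
  shows "f i (comp_seq f n x) = comp_seq f n (f i x)"
proof (induction n arbitrary: x)
  case 0 then show ?case by simp
next
  case (Suc n)
  have c: "f i \<circ> f (Suc n) = f (Suc n) \<circ> f i"
    using assms unfolding commutative_seq_def by simp
  have "f i (f (Suc n) y) = f (Suc n) (f i y)" for y
    using fun_cong[OF c, of y] by simp
  then show ?case using Suc by simp
qed

lemma comp_seq_comm:
  assumes "commutative_seq f"
  shows "comp_seq f m (comp_seq f n x) = comp_seq f n (comp_seq f m x)"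
proof (induction m arbitrary: x)
  case 0 then show ?case by simp
next
  case (Suc m)
  then show ?case using comp_seq_comm1[OF assms, of "Suc m"] by simp
qed

lemma wm_imp_trans: "na_weakly_mixing T G \<Longrightarrow> na_transitive T G"
  unfolding na_weakly_mixing_def na_transitive_def
proof (intro allI impI)
  fix U V assume A: "\<forall>U1 U2 V1 V2. openin T U1 \<and> U1 \<noteq> {} \<and> openin T U2 \<and> U2 \<noteq> {} \<and>
        openin T V1 \<and> V1 \<noteq> {} \<and> openin T V2 \<and> V2 \<noteq> {} \<longrightarrow>
        (\<exists>n\<ge>1. G n ` U1 \<inter> V1 \<noteq> {} \<and> G n ` U2 \<inter> V2 \<noteq> {})"
    and B: "openin T U \<and> U \<noteq> {} \<and> openin T V \<and> V \<noteq> {}"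
  from A[rule_format, of U U V V] B show "\<exists>n\<ge>1. G n ` U \<inter> V \<noteq> {}" by auto
qed

lemma bump:
  fixes U :: "'a::metric_space set"
  assumes "open U" "U \<noteq> {}"
  obtains u and \<phi> :: "'a \<Rightarrow> real" where "u \<in> U" "continuous_on UNIV \<phi>" "\<phi> u = 1"
    "\<And>x. 0 \<le> \<phi> x" "\<And>x. \<phi> x \<le> 1" "\<And>x. \<phi> x \<noteq> 0 \<Longrightarrow> x \<in> U"
proof -
  obtain u where u: "u \<in> U" using assms by blast
  obtain r where r: "r > 0" "ball u r \<subseteq> U" using assms(1) u open_contains_ball by blast
  define \<phi> where "\<phi> x = max 0 (1 - dist x u / r)" for x
  have c: "continuous_on UNIV \<phi>" unfolding \<phi>_def using r by (intro continuous_intros) auto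
  have "\<phi> x \<noteq> 0 \<Longrightarrow> x \<in> U" for x
  proof -
    assume "\<phi> x \<noteq> 0"
    then have "1 - dist x u / r > 0" unfolding \<phi>_def by (cases "1 - dist x u / r \<le> 0") auto
    then have "dist u x < r" using r by (simp add: dist_commute field_simps)
    then show ?thesis using r by auto
  qed
  moreover have "\<phi> u = 1" "\<And>x. 0 \<le> \<phi> x" "\<And>x. \<phi> x \<le> 1" using r by (auto simp: \<phi>_def)
  ultimately show ?thesis using that u c by blast
qed

lemma ws_open_sub: "openin weak_star_topology W \<Longrightarrow> W \<subseteq> prob_measures"
proof -
  assume "openin weak_star_topology W"
  then have "W \<subseteq> topspace weak_star_topology" by (rule openin_subset)
  also have "\<dots> = \<Union>{{M \<in> prob_measures. (\<integral>x. g x \<partial>M) \<in> U} | (g :: 'a \<Rightarrow> real) U. continuous_on UNIV g \<and> open U}"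
    unfolding weak_star_topology_def by (rule topology_generated_by_topspace)
  also have "\<dots> \<subseteq> prob_measures" by blast
  finally show ?thesis .
qed

lemma ws_basic:
  fixes g :: "'a::topological_space \<Rightarrow> real"
  assumes "continuous_on UNIV g" "open U"
  shows "openin weak_star_topology {M \<in> prob_measures. (\<integral>x. g x \<partial>M) \<in> U}"
  unfolding weak_star_topology_def
  by (rule topology_generated_by_Basis) (use assms in blast)

lemma return_prob: "return borel x \<in> prob_measures"
  unfolding prob_measures_def by (auto intro: prob_space_return)

lemma cont_bounded:
  fixes g :: "'a::metric_space \<Rightarrow> real"
  assumes "compact (UNIV :: 'a set)" "continuous_on UNIV g"
  obtains B where "\<And>x. \<bar>g x\<bar> \<le> B"
proof -
  have "compact (range g)" using assms compact_continuous_image by blast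
  then have "bounded (range g)" by (rule compact_imp_bounded)
  then show ?thesis using that unfolding bounded_real by auto
qed

lemma pm_integrable:
  fixes g :: "'a::metric_space \<Rightarrow> real"
  assumes "M \<in> prob_measures" "continuous_on UNIV g" "\<And>x. \<bar>g x\<bar> \<le> B"
  shows "integrable M g"
proof -
  interpret prob_space M using assms unfolding prob_measures_def by auto
  have s: "sets M = sets borel" using assms unfolding prob_measures_def by auto
  have "g \<in> borel_measurable M"
    using borel_measurable_continuous_onI[OF assms(2)] measurable_cong_sets[OF s refl] by blast
  then show ?thesis by (intro integrable_const_bound[where B=B]) (auto simp: assms(3))
qed

lemma twopt:
  fixes a b :: "'a::metric_space"
  shows "distr (measure_pmf (pmf_of_set {a,b})) borel id \<in> prob_measures"
    and "\<And>g::'a\<Rightarrow>real. continuous_on UNIV g \<Longrightarrow> (\<And>x. 0 \<le> g x) \<Longrightarrow>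
        (\<integral>x. g x \<partial>distr (measure_pmf (pmf_of_set {a,b})) borel id) \<ge> g a / 2 \<and>
        (\<integral>x. g x \<partial>distr (measure_pmf (pmf_of_set {a,b})) borel id) \<ge> g b / 2"
proof -
  have m: "id \<in> measurable (measure_pmf (pmf_of_set {a,b})) borel" by simp
  show "distr (measure_pmf (pmf_of_set {a,b})) borel id \<in> prob_measures" unfolding prob_measures_def
    by (auto intro!: measure_pmf.prob_space_distr m)
  fix g :: "'a \<Rightarrow> real" assume g: "continuous_on UNIV g" "\<And>x. 0 \<le> g x"
  have eq: "(\<integral>x. g x \<partial>distr (measure_pmf (pmf_of_set {a,b})) borel id) = (\<Sum>x\<in>{a,b}. g x) / card {a,b}"
    by (subst integral_distr[OF m borel_measurable_continuous_onI[OF g(1)]])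
       (simp add: integral_pmf_of_set)
  have "(\<Sum>x\<in>{a,b}. g x) / card {a,b} \<ge> g a / 2 \<and> (\<Sum>x\<in>{a,b}. g x) / card {a,b} \<ge> g b / 2"
  proof (cases "a = b")
    case True then show ?thesis using g(2)[of a] by simp
  next
    case False then show ?thesis using g(2)[of a] g(2)[of b] by simp
  qed
  then show "(\<integral>x. g x \<partial>distr (measure_pmf (pmf_of_set {a,b})) borel id) \<ge> g a / 2 \<and>
        (\<integral>x. g x \<partial>distr (measure_pmf (pmf_of_set {a,b})) borel id) \<ge> g b / 2"
    unfolding eq .
qed

lemma pm_sets: "M \<in> prob_measures \<Longrightarrow> sets M = sets borel"
  unfolding prob_measures_def by auto

lemma pm_meas: "M \<in> prob_measures \<Longrightarrow> continuous_on UNIV h \<Longrightarrow> h \<in> measurable M borel"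
  using borel_measurable_continuous_onI measurable_cong_sets[OF pm_sets refl] by blast

lemma induced_prob:
  assumes "M \<in> prob_measures" "continuous_on UNIV (comp_seq f n)"
  shows "induced_comp f n M \<in> prob_measures"
proof -
  interpret prob_space M using assms unfolding prob_measures_def by auto
  show ?thesis unfolding induced_comp_def prob_measures_def
    using prob_space_distr[OF pm_meas[OF assms]] by auto
qed

lemma induced_integral:
  fixes g :: "'a::metric_space \<Rightarrow> real"
  assumes "M \<in> prob_measures" "continuous_on UNIV (comp_seq f n)" "continuous_on UNIV g"
  shows "(\<integral>x. g x \<partial>induced_comp f n M) = (\<integral>x. g (comp_seq f n x) \<partial>M)"
  unfolding induced_comp_def
  by (rule integral_distr[OF pm_meas[OF assms(1,2)] borel_measurable_continuous_onI[OF assms(3)]])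

lemma separate_mass:
  fixes \<phi> \<psi> :: "'a::metric_space \<Rightarrow> real"
  assumes M: "M \<in> prob_measures" and cF: "continuous_on UNIV (comp_seq f n)"
    and c: "continuous_on UNIV \<phi>" "continuous_on UNIV \<psi>"
    and b: "\<And>x. 0 \<le> \<phi> x" "\<And>x. \<phi> x \<le> 1" "\<And>x. 0 \<le> \<psi> x" "\<And>x. \<psi> x \<le> 1"
    and s: "\<And>x. \<phi> x \<noteq> 0 \<Longrightarrow> x \<in> U" "\<And>x. \<psi> x \<noteq> 0 \<Longrightarrow> x \<in> V"
    and i: "(\<integral>x. \<phi> x \<partial>M) > 2/3" "(\<integral>x. \<psi> x \<partial>induced_comp f n M) > 1/3"
  shows "comp_seq f n ` U \<inter> V \<noteq> {}"
proof
  assume e: "comp_seq f n ` U \<inter> V = {}"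
  interpret prob_space M using M unfolding prob_measures_def by auto
  have le: "\<phi> x + \<psi> (comp_seq f n x) \<le> 1" for x
  proof (cases "\<phi> x = 0")
    case True then show ?thesis using b by simp
  next
    case False
    then have "x \<in> U" using s by blast
    then have "comp_seq f n x \<notin> V" using e by blast
    then have "\<psi> (comp_seq f n x) = 0" using s by blast
    then show ?thesis using b by simp
  qed
  have cc: "continuous_on UNIV (\<lambda>x. \<psi> (comp_seq f n x))"
    using continuous_on_compose2[OF c(2) cF] by simp
  have i1: "integrable M \<phi>" by (rule pm_integrable[OF M c(1), of 1]) (use b in auto)
  have i2: "integrable M (\<lambda>x. \<psi> (comp_seq f n x))"
    by (rule pm_integrable[OF M cc, of 1]) (use b in auto)
  have "(\<integral>x. \<phi> x \<partial>M) + (\<integral>x. \<psi> (comp_seq f n x) \<partial>M) = (\<integral>x. \<phi> x + \<psi> (comp_seq f n x) \<partial>M)"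
    using i1 i2 by simp
  also have "\<dots> \<le> (\<integral>x. 1 \<partial>M)"
    by (rule integral_mono) (use i1 i2 le in auto)
  also have "\<dots> = 1" using prob_space by simp
  finally show False using i induced_integral[OF M cF c(2)] by simp
qed

lemma H3:
  fixes f :: "nat \<Rightarrow> 'a::metric_space \<Rightarrow> 'a"
  assumes cont: "\<And>n. continuous_on UNIV (comp_seq f n)"
    and tr: "na_transitive weak_star_topology (induced_comp f)"
    and U: "open U" "U \<noteq> {}" and V1: "open V1" "V1 \<noteq> {}" and V2: "open V2" "V2 \<noteq> {}"
  shows "\<exists>n\<ge>1. comp_seq f n ` U \<inter> V1 \<noteq> {} \<and> comp_seq f n ` U \<inter> V2 \<noteq> {}"
proof -
  obtain u and \<phi> :: "'a \<Rightarrow> real" where u: "u \<in> U" "continuous_on UNIV \<phi>" "\<phi> u = 1"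
    "\<And>x. 0 \<le> \<phi> x" "\<And>x. \<phi> x \<le> 1" "\<And>x. \<phi> x \<noteq> 0 \<Longrightarrow> x \<in> U"
    using bump[OF U] by blast
  obtain v1 and \<psi>1 :: "'a \<Rightarrow> real" where v1: "v1 \<in> V1" "continuous_on UNIV \<psi>1" "\<psi>1 v1 = 1"
    "\<And>x. 0 \<le> \<psi>1 x" "\<And>x. \<psi>1 x \<le> 1" "\<And>x. \<psi>1 x \<noteq> 0 \<Longrightarrow> x \<in> V1"
    using bump[OF V1] by blast
  obtain v2 and \<psi>2 :: "'a \<Rightarrow> real" where v2: "v2 \<in> V2" "continuous_on UNIV \<psi>2" "\<psi>2 v2 = 1"
    "\<And>x. 0 \<le> \<psi>2 x" "\<And>x. \<psi>2 x \<le> 1" "\<And>x. \<psi>2 x \<noteq> 0 \<Longrightarrow> x \<in> V2"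
    using bump[OF V2] by blast
  define UU where "UU = {M \<in> prob_measures. (\<integral>x. \<phi> x \<partial>M) \<in> {2/3<..}}"
  define VV where "VV = {M \<in> prob_measures. (\<integral>x. \<psi>1 x \<partial>M) \<in> {1/3<..}} \<inter>
                        {M \<in> prob_measures. (\<integral>x. \<psi>2 x \<partial>M) \<in> {1/3<..}}"
  have oU: "openin weak_star_topology UU" unfolding UU_def by (rule ws_basic[OF u(2)]) simp
  have oV: "openin weak_star_topology VV" unfolding VV_def
    by (intro openin_Int ws_basic v1(2) v2(2)) simp_all
  have "return borel u \<in> UU" unfolding UU_def
    using return_prob[of u] integral_return[of u borel \<phi>] borel_measurable_continuous_onI[OF u(2)] u(3)
    by simp
  then have neU: "UU \<noteq> {}" by blast
  have "distr (measure_pmf (pmf_of_set {v1,v2})) borel id \<in> VV" unfolding VV_def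
    using twopt(1)[of v1 v2] twopt(2)[of \<psi>1 v1 v2] twopt(2)[of \<psi>2 v1 v2] v1 v2 by force
  then have neV: "VV \<noteq> {}" by blast
  obtain n where n: "n \<ge> 1" "induced_comp f n ` UU \<inter> VV \<noteq> {}"
    using tr[unfolded na_transitive_def, rule_format, of UU VV] oU oV neU neV by blast
  then obtain M where M: "M \<in> UU" "induced_comp f n M \<in> VV" by blast
  have Mp: "M \<in> prob_measures" using M unfolding UU_def by auto
  have "comp_seq f n ` U \<inter> V1 \<noteq> {}"
    by (rule separate_mass[OF Mp cont u(2) v1(2) u(4,5) v1(4,5) u(6) v1(6)])
       (use M in \<open>auto simp: UU_def VV_def\<close>)
  moreover have "comp_seq f n ` U \<inter> V2 \<noteq> {}"
    by (rule separate_mass[OF Mp cont u(2) v2(2) u(4,5) v2(4,5) u(6) v2(6)])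
       (use M in \<open>auto simp: UU_def VV_def\<close>)
  ultimately show ?thesis using n by blast
qed

lemma H3_imp_wm:
  fixes f :: "nat \<Rightarrow> 'a::metric_space \<Rightarrow> 'a"
  assumes cont: "\<And>n. continuous_on UNIV (comp_seq f n)" and comm: "commutative_seq f"
    and H: "\<And>U V1 V2. open U \<Longrightarrow> U \<noteq> {} \<Longrightarrow> open V1 \<Longrightarrow> V1 \<noteq> {} \<Longrightarrow> open V2 \<Longrightarrow> V2 \<noteq> {} \<Longrightarrow>
       \<exists>n\<ge>1. comp_seq f n ` U \<inter> V1 \<noteq> {} \<and> comp_seq f n ` U \<inter> V2 \<noteq> {}"
  shows "na_weakly_mixing euclidean (comp_seq f)"
  unfolding na_weakly_mixing_def
proof (intro allI impI)
  fix U1 U2 V1 V2 :: "'a set"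
  assume "openin euclidean U1 \<and> U1 \<noteq> {} \<and> openin euclidean U2 \<and> U2 \<noteq> {} \<and>
        openin euclidean V1 \<and> V1 \<noteq> {} \<and> openin euclidean V2 \<and> V2 \<noteq> {}"
  then have o: "open U1" "U1 \<noteq> {}" "open U2" "U2 \<noteq> {}" "open V1" "V1 \<noteq> {}" "open V2" "V2 \<noteq> {}"
    by auto
  obtain k where k: "k \<ge> 1" "comp_seq f k ` U1 \<inter> U2 \<noteq> {}" "comp_seq f k ` U1 \<inter> V2 \<noteq> {}"
    using H[OF o(1,2,3,4,7,8)] by blast
  define W where "W = U1 \<inter> comp_seq f k -` U2"
  define Z where "Z = comp_seq f k -` V2"
  have oW: "open W" unfolding W_def using o cont by (intro open_Int open_vimage) auto
  have oZ: "open Z" unfolding Z_def using o cont by (intro open_vimage) auto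
  have neW: "W \<noteq> {}" using k(2) unfolding W_def by blast
  have neZ: "Z \<noteq> {}" using k(3) unfolding Z_def by blast
  obtain n where n: "n \<ge> 1" "comp_seq f n ` W \<inter> V1 \<noteq> {}" "comp_seq f n ` W \<inter> Z \<noteq> {}"
    using H[OF oW neW o(5,6) oZ neZ] by blast
  have "comp_seq f n ` U1 \<inter> V1 \<noteq> {}" using n(2) unfolding W_def by blast
  moreover have "comp_seq f n ` U2 \<inter> V2 \<noteq> {}"
  proof -
    obtain y where y: "y \<in> W" "comp_seq f n y \<in> Z" using n(3) by blast
    then have "comp_seq f k y \<in> U2" "comp_seq f n (comp_seq f k y) \<in> V2"
      unfolding W_def Z_def using comp_seq_comm[OF comm, of k n y] by auto
    then show ?thesis by blast
  qed
  ultimately show "\<exists>n\<ge>1. comp_seq f n ` U1 \<inter> V1 \<noteq> {} \<and> comp_seq f n ` U2 \<inter> V2 \<noteq> {}"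
    using n(1) by blast
qed

lemma wm_all:
  fixes F :: "nat \<Rightarrow> 'a::metric_space \<Rightarrow> 'a" and m :: nat
  assumes cont: "\<And>n. continuous_on UNIV (F n)"
    and comm: "\<And>m n x. F m (F n x) = F n (F m x)"
    and wm: "na_weakly_mixing euclidean F"
  shows "\<forall>(U::nat \<Rightarrow> 'a set) (V::nat \<Rightarrow> 'a set). (\<forall>i<m. open (U i) \<and> U i \<noteq> {} \<and> open (V i) \<and> V i \<noteq> {}) \<longrightarrow>
           (\<exists>n\<ge>1. \<forall>i<m. F n ` U i \<inter> V i \<noteq> {})"
proof (induction m)
  case 0 then show ?case by auto
next
  case (Suc m)
  show ?case
  proof (intro allI impI)
    fix U V :: "nat \<Rightarrow> 'a set"
    assume A: "\<forall>i<Suc m. open (U i) \<and> U i \<noteq> {} \<and> open (V i) \<and> V i \<noteq> {}"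
    show "\<exists>n\<ge>1. \<forall>i<Suc m. F n ` U i \<inter> V i \<noteq> {}"
    proof (cases m)
      case 0
      then have "open (U 0)" "U 0 \<noteq> {}" "open (V 0)" "V 0 \<noteq> {}" using A by auto
      then obtain n where "n \<ge> 1" "F n ` U 0 \<inter> V 0 \<noteq> {}"
        using wm unfolding na_weakly_mixing_def by (metis open_openin)
      then show ?thesis using 0 by (intro exI[of _ n]) auto
    next
      case (Suc k)
      have o: "open (U k)" "U k \<noteq> {}" "open (V k)" "V k \<noteq> {}"
              "open (U (Suc k))" "U (Suc k) \<noteq> {}" "open (V (Suc k))" "V (Suc k) \<noteq> {}"
        using A Suc by auto
      obtain j where j: "j \<ge> 1" "F j ` U k \<inter> U (Suc k) \<noteq> {}" "F j ` V k \<inter> V (Suc k) \<noteq> {}"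
        using wm o unfolding na_weakly_mixing_def by (metis open_openin)
      define W where "W = U k \<inter> F j -` U (Suc k)"
      define Z where "Z = V k \<inter> F j -` V (Suc k)"
      have oW: "open W" "W \<noteq> {}" unfolding W_def using o cont j(2) by (auto intro!: open_Int open_vimage)
      have oZ: "open Z" "Z \<noteq> {}" unfolding Z_def using o cont j(3) by (auto intro!: open_Int open_vimage)
      have "\<forall>i<m. open ((U(k:=W)) i) \<and> (U(k:=W)) i \<noteq> {} \<and> open ((V(k:=Z)) i) \<and> (V(k:=Z)) i \<noteq> {}"
        using A oW oZ Suc by auto
      then obtain n where n: "n \<ge> 1" "\<forall>i<m. F n ` (U(k:=W)) i \<inter> (V(k:=Z)) i \<noteq> {}"
        using Suc.IH by blast
      have "\<forall>i<Suc m. F n ` U i \<inter> V i \<noteq> {}"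
      proof (intro allI impI)
        fix i assume i: "i < Suc m"
        show "F n ` U i \<inter> V i \<noteq> {}"
        proof (cases "i < k")
          case True
          then have "i < m" using Suc by simp
          then have "F n ` (U(k:=W)) i \<inter> (V(k:=Z)) i \<noteq> {}" using n(2) by blast
          then show ?thesis using True by simp
        next
          case False
          have nWZ: "F n ` W \<inter> Z \<noteq> {}" using n(2) Suc by (metis fun_upd_same lessI)
          then obtain x where x: "x \<in> W" "F n x \<in> Z" by blast
          show ?thesis
          proof (cases "i = k")
            case True then show ?thesis using x unfolding W_def Z_def by blast
          next
            case False
            then have "i = Suc k" using i Suc \<open>\<not> i < k\<close> by auto
            moreover have "F j x \<in> U (Suc k)" "F n (F j x) \<in> V (Suc k)"
              using x comm[of n j x] unfolding W_def Z_def by auto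
            ultimately show ?thesis by blast
          qed
        qed
      qed
      then show ?thesis using n(1) by blast
    qed
  qed
qed

lemma ws_nbhd_gen:
  assumes "generate_topology_on {{M \<in> prob_measures. (\<integral>x. g x \<partial>M) \<in> U} | (g :: 'a::topological_space \<Rightarrow> real) U. continuous_on UNIV g \<and> open U} W"
  shows "\<forall>\<mu>\<in>W. \<exists>(G::('a \<Rightarrow> real) set) (e::real). finite G \<and> (\<forall>g\<in>G. continuous_on UNIV g) \<and> e > 0 \<and>
     (\<forall>\<nu>\<in>prob_measures. (\<forall>g\<in>G. \<bar>(\<integral>x. g x \<partial>\<nu>) - (\<integral>x. g x \<partial>\<mu>)\<bar> < e) \<longrightarrow> \<nu> \<in> W)"
  using assms
proof (induction rule: generate_topology_on.induct)
  case Empty then show ?case by (intro ballI) (erule emptyE)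
next
  case (Int a b)
  show ?case
  proof
    fix \<mu> assume "\<mu> \<in> a \<inter> b"
    then have ma: "\<mu> \<in> a" and mb: "\<mu> \<in> b" by auto
    obtain Ga :: "('a \<Rightarrow> real) set" and ea :: real where
      A: "finite Ga" "\<forall>g\<in>Ga. continuous_on UNIV g" "ea > 0"
         "\<forall>\<nu>\<in>prob_measures. (\<forall>g\<in>Ga. \<bar>(\<integral>x. g x \<partial>\<nu>) - (\<integral>x. g x \<partial>\<mu>)\<bar> < ea) \<longrightarrow> \<nu> \<in> a"
      using Int.IH(1)[rule_format, OF ma] by (elim exE conjE) blast
    obtain Gb :: "('a \<Rightarrow> real) set" and eb :: real where
      B: "finite Gb" "\<forall>g\<in>Gb. continuous_on UNIV g" "eb > 0"
         "\<forall>\<nu>\<in>prob_measures. (\<forall>g\<in>Gb. \<bar>(\<integral>x. g x \<partial>\<nu>) - (\<integral>x. g x \<partial>\<mu>)\<bar> < eb) \<longrightarrow> \<nu> \<in> b"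
      using Int.IH(2)[rule_format, OF mb] by (elim exE conjE) blast
    show "\<exists>(G::('a \<Rightarrow> real) set) (e::real). finite G \<and> (\<forall>g\<in>G. continuous_on UNIV g) \<and> e > 0 \<and>
     (\<forall>\<nu>\<in>prob_measures. (\<forall>g\<in>G. \<bar>(\<integral>x. g x \<partial>\<nu>) - (\<integral>x. g x \<partial>\<mu>)\<bar> < e) \<longrightarrow> \<nu> \<in> a \<inter> b)"
    proof (rule exI[of _ "Ga \<union> Gb"], rule exI[of _ "min ea eb"], intro conjI ballI impI)
      show "finite (Ga \<union> Gb)" using A(1) B(1) by simp
      show "min ea eb > 0" using A(3) B(3) by simp
      fix g assume "g \<in> Ga \<union> Gb" then show "continuous_on UNIV g" using A(2) B(2) by blast
    next
      fix \<nu> assume \<nu>: "\<nu> \<in> prob_measures"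
        and H: "\<forall>g\<in>Ga \<union> Gb. \<bar>(\<integral>x. g x \<partial>\<nu>) - (\<integral>x. g x \<partial>\<mu>)\<bar> < min ea eb"
      have "\<forall>g\<in>Ga. \<bar>(\<integral>x. g x \<partial>\<nu>) - (\<integral>x. g x \<partial>\<mu>)\<bar> < ea" using H by force
      then have "\<nu> \<in> a" using A(4) \<nu> by blast
      moreover have "\<forall>g\<in>Gb. \<bar>(\<integral>x. g x \<partial>\<nu>) - (\<integral>x. g x \<partial>\<mu>)\<bar> < eb" using H by force
      then have "\<nu> \<in> b" using B(4) \<nu> by blast
      ultimately show "\<nu> \<in> a \<inter> b" by blast
    qed
  qed
next
  case (UN K)
  show ?case
  proof
    fix \<mu> assume "\<mu> \<in> \<Union>K"
    then obtain k where k: "k \<in> K" "\<mu> \<in> k" by (rule UnionE)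
    then obtain G :: "('a \<Rightarrow> real) set" and e :: real where G: "finite G" "\<forall>g\<in>G. continuous_on UNIV g" "e > 0"
         "\<forall>\<nu>\<in>prob_measures. (\<forall>g\<in>G. \<bar>(\<integral>x. g x \<partial>\<nu>) - (\<integral>x. g x \<partial>\<mu>)\<bar> < e) \<longrightarrow> \<nu> \<in> k"
      using UN.IH[OF k(1), rule_format, OF k(2)] by (elim exE conjE) blast
    then show "\<exists>(G::('a \<Rightarrow> real) set) (e::real). finite G \<and> (\<forall>g\<in>G. continuous_on UNIV g) \<and> e > 0 \<and>
     (\<forall>\<nu>\<in>prob_measures. (\<forall>g\<in>G. \<bar>(\<integral>x. g x \<partial>\<nu>) - (\<integral>x. g x \<partial>\<mu>)\<bar> < e) \<longrightarrow> \<nu> \<in> \<Union>K)"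
      using G k(1) by (intro exI[of _ G] exI[of _ e]) blast
  qed
next
  case (Basis s)
  then obtain g :: "'a \<Rightarrow> real" and U :: "real set" where gU: "s = {M \<in> prob_measures. (\<integral>x. g x \<partial>M) \<in> U}" "continuous_on UNIV g" "open U"
    by blast
  show ?case
  proof
    fix \<mu> assume "\<mu> \<in> s"
    then have "(\<integral>x. g x \<partial>\<mu>) \<in> U" using gU by auto
    then obtain e :: real where e: "e > 0" "ball (\<integral>x. g x \<partial>\<mu>) e \<subseteq> U" using gU(3) open_contains_ball by blast
    show "\<exists>(G::('a \<Rightarrow> real) set) (e::real). finite G \<and> (\<forall>g\<in>G. continuous_on UNIV g) \<and> e > 0 \<and>
     (\<forall>\<nu>\<in>prob_measures. (\<forall>g\<in>G. \<bar>(\<integral>x. g x \<partial>\<nu>) - (\<integral>x. g x \<partial>\<mu>)\<bar> < e) \<longrightarrow> \<nu> \<in> s)"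
    proof (rule exI[of _ "{g}"], rule exI[of _ e], intro conjI ballI impI)
      show "finite {g}" by simp
      show "e > 0" using e by simp
      fix h assume "h \<in> {g}" then show "continuous_on UNIV h" using gU by simp
    next
      fix \<nu> assume nu: "\<nu> \<in> prob_measures" "\<forall>h\<in>{g}. \<bar>(\<integral>x. h x \<partial>\<nu>) - (\<integral>x. h x \<partial>\<mu>)\<bar> < e"
      then have "\<bar>(\<integral>x. g x \<partial>\<nu>) - (\<integral>x. g x \<partial>\<mu>)\<bar> < e" by simp
      then have "(\<integral>x. g x \<partial>\<nu>) \<in> ball (\<integral>x. g x \<partial>\<mu>) e" by (simp add: dist_real_def abs_minus_commute)
      then have "(\<integral>x. g x \<partial>\<nu>) \<in> U" using e(2) by blast
      then show "\<nu> \<in> s" using nu(1) gU(1) by simp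
    qed
  qed
qed

lemma ws_nbhd:
  fixes \<mu> :: "'a::topological_space measure"
  assumes "openin weak_star_topology W" "\<mu> \<in> W"
  obtains G :: "('a \<Rightarrow> real) set" and e :: real where "finite G" "\<forall>g\<in>G. continuous_on UNIV g" "e > 0"
     "\<forall>\<nu>\<in>prob_measures. (\<forall>g\<in>G. \<bar>(\<integral>x. g x \<partial>\<nu>) - (\<integral>x. g x \<partial>\<mu>)\<bar> < e) \<longrightarrow> \<nu> \<in> W"
proof -
  have g: "generate_topology_on {{M \<in> prob_measures. (\<integral>x. g x \<partial>M) \<in> U} | (g :: 'a \<Rightarrow> real) U. continuous_on UNIV g \<and> open U} W"
    using assms(1) unfolding weak_star_topology_def by (rule openin_topology_generated_by)
  have "\<exists>(G::('a \<Rightarrow> real) set) (e::real). finite G \<and> (\<forall>g\<in>G. continuous_on UNIV g) \<and> e > 0 \<and>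
     (\<forall>\<nu>\<in>prob_measures. (\<forall>g\<in>G. \<bar>(\<integral>x. g x \<partial>\<nu>) - (\<integral>x. g x \<partial>\<mu>)\<bar> < e) \<longrightarrow> \<nu> \<in> W)"
    by (rule bspec[OF ws_nbhd_gen[OF g] assms(2)])
  then show ?thesis by (elim exE conjE) (rule that; assumption)
qed

lemma unif_family:
  fixes G :: "('a::metric_space \<Rightarrow> real) set"
  assumes "compact (UNIV::'a set)" "finite G" "\<forall>g\<in>G. continuous_on UNIV g" "e > 0"
  shows "\<exists>d>0. \<forall>g\<in>G. \<forall>x y. dist x y < d \<longrightarrow> \<bar>g x - g y\<bar> < e"
  using assms(2,3)
proof (induction G rule: finite_induct)
  case empty then show ?case by (intro exI[of _ 1]) auto
next
  case (insert g G)
  then obtain d :: real where d: "d > 0" "\<forall>g\<in>G. \<forall>x y. dist x y < d \<longrightarrow> \<bar>g x - g y\<bar> < e" by auto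
  have "uniformly_continuous_on UNIV g"
    using insert.prems assms(1) by (intro compact_uniformly_continuous) auto
  then obtain d' :: real where d': "d' > 0" "\<forall>x\<in>UNIV. \<forall>y\<in>UNIV. dist y x < d' \<longrightarrow> dist (g y) (g x) < e"
    using assms(4) unfolding uniformly_continuous_on_def by metis
  show ?case
  proof (intro exI[of _ "min d d'"] conjI ballI allI impI)
    show "min d d' > 0" using d d' by simp
    fix h and x y :: 'a assume h: "h \<in> insert g G" and xy: "dist x y < min d d'"
    show "\<bar>h x - h y\<bar> < e"
    proof (cases "h = g")
      case True then show ?thesis using d' xy by (auto simp: dist_real_def)
    next
      case False then show ?thesis using h d xy by auto
    qed
  qed
qed

lemma net:
  assumes "compact (UNIV::'a::metric_space set)" "d > 0"
  shows "\<exists>m (c :: nat \<Rightarrow> 'a). \<forall>x. \<exists>a<m. dist x (c a) < d"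
proof -
  have cov: "UNIV \<subseteq> (\<Union>c\<in>(UNIV::'a set). ball c d)"
  proof
    fix x :: 'a show "x \<in> (\<Union>c\<in>UNIV. ball c d)" using assms(2) by (intro UN_I[of x]) auto
  qed
  obtain C :: "'a set" where C: "C \<subseteq> UNIV" "finite C" "UNIV \<subseteq> (\<Union>c\<in>C. ball c d)"
    by (rule compactE_image[OF assms(1) _ cov]) (rule open_ball)
  obtain xs where xs: "set xs = C" using finite_list[OF C(2)] by blast
  have "\<exists>a<length xs. dist x (xs ! a) < d" for x :: 'a
  proof -
    obtain c :: 'a where "c \<in> C" "x \<in> ball c d" using C(3) by blast
    then obtain a where "a < length xs" "xs ! a = c" using xs by (metis in_set_conv_nth)
    then show ?thesis using \<open>x \<in> ball c d\<close> by (auto simp: dist_commute)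
  qed
  then show ?thesis by blast
qed

lemma distr_fst_snd:
  assumes "prob_space M" "prob_space N"
  shows "distr (M \<Otimes>\<^sub>M N) M fst = M" "distr (M \<Otimes>\<^sub>M N) N snd = N"
proof -
  interpret N: prob_space N by fact
  interpret M: prob_space M by fact
  interpret P: pair_sigma_finite M N ..
  show "distr (M \<Otimes>\<^sub>M N) M fst = M" by (rule N.distr_pair_fst)
  have e: "M \<Otimes>\<^sub>M N = distr (N \<Otimes>\<^sub>M M) (M \<Otimes>\<^sub>M N) (\<lambda>(x,y). (y,x))"
    by (rule P.distr_pair_swap)
  have m1: "(\<lambda>(x,y). (y,x)) \<in> measurable (N \<Otimes>\<^sub>M M) (M \<Otimes>\<^sub>M N)" by measurable
  have "distr (M \<Otimes>\<^sub>M N) N snd = distr (distr (N \<Otimes>\<^sub>M M) (M \<Otimes>\<^sub>M N) (\<lambda>(x,y). (y,x))) N snd"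
    by (rule arg_cong[where f="\<lambda>X. distr X N snd", OF e])
  also have "\<dots> = distr (N \<Otimes>\<^sub>M M) N (snd \<circ> (\<lambda>(x,y). (y,x)))"
    by (rule distr_distr[OF measurable_snd m1])
  also have "snd \<circ> (\<lambda>(x,y). (y,x)) = fst" by auto
  also have "distr (N \<Otimes>\<^sub>M M) N fst = N" by (rule M.distr_pair_fst)
  finally show "distr (M \<Otimes>\<^sub>M N) N snd = N" .
qed


lemma int_close:
  fixes h1 h2 :: "'b \<Rightarrow> real"
  assumes P: "prob_space P" and m: "h1 \<in> borel_measurable P" "h2 \<in> borel_measurable P"
    and b: "\<And>p. \<bar>h1 p\<bar> \<le> B" "\<And>p. \<bar>h2 p\<bar> \<le> B"
    and c: "\<And>p. p \<in> space P \<Longrightarrow> \<bar>h1 p - h2 p\<bar> \<le> e"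
  shows "\<bar>(\<integral>p. h1 p \<partial>P) - (\<integral>p. h2 p \<partial>P)\<bar> \<le> e"
proof -
  interpret prob_space P by fact
  have i1: "integrable P h1" by (rule integrable_const_bound[where B=B]) (use m b in auto)
  have i2: "integrable P h2" by (rule integrable_const_bound[where B=B]) (use m b in auto)
  have pw: "h1 p \<le> h2 p + e" "h2 p \<le> h1 p + e" if "p \<in> space P" for p
    using c[OF that] by (auto simp: abs_le_iff)
  have "(\<integral>p. h1 p \<partial>P) \<le> (\<integral>p. h2 p + e \<partial>P)"
    by (rule integral_mono) (use i1 i2 pw in auto)
  also have "\<dots> = (\<integral>p. h2 p \<partial>P) + e" using i2 prob_space by simp
  finally have 1: "(\<integral>p. h1 p \<partial>P) \<le> (\<integral>p. h2 p \<partial>P) + e" .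
  have "(\<integral>p. h2 p \<partial>P) \<le> (\<integral>p. h1 p + e \<partial>P)"
    by (rule integral_mono) (use i1 i2 pw in auto)
  also have "\<dots> = (\<integral>p. h1 p \<partial>P) + e" using i1 prob_space by simp
  finally have 2: "(\<integral>p. h2 p \<partial>P) \<le> (\<integral>p. h1 p \<partial>P) + e" .
  show ?thesis using 1 2 by linarith
qed

lemma pair_prob:
  assumes "\<mu> \<in> prob_measures" "\<nu> \<in> prob_measures"
  shows "prob_space (\<mu> \<Otimes>\<^sub>M \<nu>)"
proof -
  interpret A: prob_space \<mu> using assms unfolding prob_measures_def by auto
  interpret B: prob_space \<nu> using assms unfolding prob_measures_def by auto
  interpret pair_prob_space \<mu> \<nu> ..
  show ?thesis by (rule P.prob_space_axioms)
qed

lemma integral_fst_pm: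
  fixes g :: "'a::metric_space \<Rightarrow> real"
  assumes "\<mu> \<in> prob_measures" "\<nu> \<in> prob_measures" "continuous_on UNIV g"
  shows "(\<integral>x. g x \<partial>\<mu>) = (\<integral>p. g (fst p) \<partial>(\<mu> \<Otimes>\<^sub>M \<nu>))"
    and "(\<integral>x. g x \<partial>\<nu>) = (\<integral>p. g (snd p) \<partial>(\<mu> \<Otimes>\<^sub>M \<nu>))"
proof -
  have ps: "prob_space \<mu>" "prob_space \<nu>" using assms unfolding prob_measures_def by auto
  have "(\<integral>x. g x \<partial>\<mu>) = (\<integral>x. g x \<partial>distr (\<mu> \<Otimes>\<^sub>M \<nu>) \<mu> fst)"
    using distr_fst_snd(1)[OF ps] by simp
  also have "\<dots> = (\<integral>p. g (fst p) \<partial>(\<mu> \<Otimes>\<^sub>M \<nu>))"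
    by (rule integral_distr[OF measurable_fst pm_meas[OF assms(1,3)]])
  finally show "(\<integral>x. g x \<partial>\<mu>) = (\<integral>p. g (fst p) \<partial>(\<mu> \<Otimes>\<^sub>M \<nu>))" .
  have "(\<integral>x. g x \<partial>\<nu>) = (\<integral>x. g x \<partial>distr (\<mu> \<Otimes>\<^sub>M \<nu>) \<nu> snd)"
    using distr_fst_snd(2)[OF ps] by simp
  also have "\<dots> = (\<integral>p. g (snd p) \<partial>(\<mu> \<Otimes>\<^sub>M \<nu>))"
    by (rule integral_distr[OF measurable_snd pm_meas[OF assms(2,3)]])
  finally show "(\<integral>x. g x \<partial>\<nu>) = (\<integral>p. g (snd p) \<partial>(\<mu> \<Otimes>\<^sub>M \<nu>))" .
qed

lemma cls_meas:
  fixes c :: "nat \<Rightarrow> 'a::metric_space"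
  shows "(\<lambda>x. LEAST a. dist x (c a) < d) \<in> measurable borel (count_space UNIV)"
proof (rule measurable_Least)
  fix i
  have [measurable]: "(\<lambda>x. dist x (c i)) \<in> borel_measurable borel"
    by (intro borel_measurable_continuous_onI continuous_intros)
  show "(\<lambda>x. dist x (c i) < d) \<in> measurable borel (count_space UNIV)"
    by (rule borel_measurable_pred_less) (auto intro: borel_measurable_const)
qed

lemma Z_meas:
  fixes c :: "nat \<Rightarrow> 'a::metric_space" and z :: "nat \<Rightarrow> nat \<Rightarrow> 'a"
  assumes "\<mu> \<in> prob_measures" "\<nu> \<in> prob_measures"
  shows "(\<lambda>p. z (LEAST a. dist (fst p) (c a) < d) (LEAST a. dist (snd p) (c a) < d)) \<in> measurable (\<mu> \<Otimes>\<^sub>M \<nu>) borel"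
proof -
  have s: "sets (\<mu> \<Otimes>\<^sub>M \<nu>) = sets (borel \<Otimes>\<^sub>M borel)"
    by (rule sets_pair_measure_cong) (simp_all add: pm_sets assms)
  have c1: "(\<lambda>p. LEAST a. dist (fst p) (c a) < d) \<in> measurable (borel \<Otimes>\<^sub>M borel) (count_space UNIV)"
    using measurable_comp[OF measurable_fst cls_meas[of c d]] by (simp add: comp_def)
  have c2: "(\<lambda>p. LEAST a. dist (snd p) (c a) < d) \<in> measurable (borel \<Otimes>\<^sub>M borel) (count_space UNIV)"
    using measurable_comp[OF measurable_snd cls_meas[of c d]] by (simp add: comp_def)
  have "(\<lambda>p. z (LEAST a. dist (fst p) (c a) < d) (LEAST a. dist (snd p) (c a) < d)) \<in> measurable (borel \<Otimes>\<^sub>M borel) borel"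
  proof (rule measurable_compose_countable[where f="\<lambda>i p. z i (LEAST a. dist (snd p) (c a) < d)", OF _ c1])
    fix i
    show "(\<lambda>p. z i (LEAST a. dist (snd p) (c a) < d)) \<in> measurable (borel \<Otimes>\<^sub>M borel) borel"
      by (rule measurable_compose_countable[where f="\<lambda>j p. z i j", OF _ c2]) simp
  qed
  moreover have eq: "measurable (\<mu> \<Otimes>\<^sub>M \<nu>) (borel :: 'a measure) = measurable (borel \<Otimes>\<^sub>M borel) borel"
    by (rule measurable_cong_sets[OF s refl])
  ultimately show ?thesis by (simp only: eq)
qed

lemma wm_imp_induced:
  fixes f :: "nat \<Rightarrow> 'a::metric_space \<Rightarrow> 'a"
  assumes cpt: "compact (UNIV::'a set)" and cont: "\<And>n. continuous_on UNIV (comp_seq f n)"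
    and comm: "commutative_seq f" and wm: "na_weakly_mixing euclidean (comp_seq f)"
  shows "na_weakly_mixing weak_star_topology (induced_comp f)"
  unfolding na_weakly_mixing_def
proof (intro allI impI)
  fix A1 A2 B1 B2 :: "'a measure set"
  assume "openin weak_star_topology A1 \<and> A1 \<noteq> {} \<and> openin weak_star_topology A2 \<and> A2 \<noteq> {} \<and>
        openin weak_star_topology B1 \<and> B1 \<noteq> {} \<and> openin weak_star_topology B2 \<and> B2 \<noteq> {}"
  then have o: "openin weak_star_topology A1" "A1 \<noteq> {}" "openin weak_star_topology A2" "A2 \<noteq> {}"
     "openin weak_star_topology B1" "B1 \<noteq> {}" "openin weak_star_topology B2" "B2 \<noteq> {}"
    by auto
  obtain \<mu>1 where \<mu>1: "\<mu>1 \<in> A1" using o(2) by blast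
  obtain \<mu>2 where \<mu>2: "\<mu>2 \<in> A2" using o(4) by blast
  obtain \<nu>1 where \<nu>1: "\<nu>1 \<in> B1" using o(6) by blast
  obtain \<nu>2 where \<nu>2: "\<nu>2 \<in> B2" using o(8) by blast
  have p\<mu>1: "\<mu>1 \<in> prob_measures" using ws_open_sub[OF o(1)] \<mu>1 by blast
  have p\<mu>2: "\<mu>2 \<in> prob_measures" using ws_open_sub[OF o(3)] \<mu>2 by blast
  have p\<nu>1: "\<nu>1 \<in> prob_measures" using ws_open_sub[OF o(5)] \<nu>1 by blast
  have p\<nu>2: "\<nu>2 \<in> prob_measures" using ws_open_sub[OF o(7)] \<nu>2 by blast
  obtain G1 :: "('a \<Rightarrow> real) set" and e1 :: real where G1: "finite G1" "\<forall>g\<in>G1. continuous_on UNIV g" "e1 > 0"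
     "\<forall>\<nu>\<in>prob_measures. (\<forall>g\<in>G1. \<bar>(\<integral>x. g x \<partial>\<nu>) - (\<integral>x. g x \<partial>\<mu>1)\<bar> < e1) \<longrightarrow> \<nu> \<in> A1"
    by (rule ws_nbhd[OF o(1) \<mu>1])
  obtain G2 :: "('a \<Rightarrow> real) set" and e2 :: real where G2: "finite G2" "\<forall>g\<in>G2. continuous_on UNIV g" "e2 > 0"
     "\<forall>\<nu>\<in>prob_measures. (\<forall>g\<in>G2. \<bar>(\<integral>x. g x \<partial>\<nu>) - (\<integral>x. g x \<partial>\<mu>2)\<bar> < e2) \<longrightarrow> \<nu> \<in> A2"
    by (rule ws_nbhd[OF o(3) \<mu>2])
  obtain H1 :: "('a \<Rightarrow> real) set" and e3 :: real where H1: "finite H1" "\<forall>g\<in>H1. continuous_on UNIV g" "e3 > 0"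
     "\<forall>\<nu>\<in>prob_measures. (\<forall>g\<in>H1. \<bar>(\<integral>x. g x \<partial>\<nu>) - (\<integral>x. g x \<partial>\<nu>1)\<bar> < e3) \<longrightarrow> \<nu> \<in> B1"
    by (rule ws_nbhd[OF o(5) \<nu>1])
  obtain H2 :: "('a \<Rightarrow> real) set" and e4 :: real where H2: "finite H2" "\<forall>g\<in>H2. continuous_on UNIV g" "e4 > 0"
     "\<forall>\<nu>\<in>prob_measures. (\<forall>g\<in>H2. \<bar>(\<integral>x. g x \<partial>\<nu>) - (\<integral>x. g x \<partial>\<nu>2)\<bar> < e4) \<longrightarrow> \<nu> \<in> B2"
    by (rule ws_nbhd[OF o(7) \<nu>2])
  define G where "G = G1 \<union> G2 \<union> H1 \<union> H2"
  define e where "e = min (min e1 e2) (min e3 e4)"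
  have Gf: "finite G" "\<forall>g\<in>G. continuous_on UNIV g" unfolding G_def using G1 G2 H1 H2 by auto
  have ep: "e > 0" "e \<le> e1" "e \<le> e2" "e \<le> e3" "e \<le> e4" unfolding e_def using G1 G2 H1 H2 by auto
  have "e/2 > 0" using ep by simp
  from unif_family[OF cpt Gf(1,2) this]
  obtain \<delta> :: real where \<delta>: "\<delta> > 0" "\<forall>g\<in>G. \<forall>x y. dist x y < \<delta> \<longrightarrow> \<bar>g x - g y\<bar> < e/2"
    by blast
  define d where "d = \<delta>/2"
  have d: "d > 0" using \<delta> d_def by simp
  obtain m and c :: "nat \<Rightarrow> 'a" where mc: "\<forall>x. \<exists>a<m. dist x (c a) < d" using net[OF cpt d] by blast
  define cls where "cls x = (LEAST a. dist x (c a) < d)" for x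
  have cls: "cls x < m" "dist x (c (cls x)) < d" for x
  proof -
    obtain a where a: "a < m" "dist x (c a) < d" using mc by blast
    have "dist x (c (cls x)) < d" unfolding cls_def by (rule LeastI[of _ a]) (rule a(2))
    moreover have "cls x \<le> a" unfolding cls_def by (rule Least_le) (rule a(2))
    ultimately show "cls x < m" "dist x (c (cls x)) < d" using a by auto
  qed
  define UU where "UU k = ball (c (k div m)) d" for k
  define VV where "VV k = ball (c (k mod m)) d" for k
  have fam: "\<forall>i<m*m. open (UU i) \<and> UU i \<noteq> {} \<and> open (VV i) \<and> VV i \<noteq> {}"
    using d unfolding UU_def VV_def by auto
  have "\<exists>n\<ge>1. \<forall>i<m*m. comp_seq f n ` UU i \<inter> VV i \<noteq> {}"
    using wm_all[OF cont comp_seq_comm[OF comm] wm, of "m*m"] fam by blast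
  then obtain n where n: "n \<ge> 1" "\<forall>i<m*m. comp_seq f n ` UU i \<inter> VV i \<noteq> {}" by blast
  have zex: "\<exists>x. dist (c a) x < d \<and> dist (c b) (comp_seq f n x) < d" if ab: "a < m" "b < m" for a b
  proof -
    have "a*m + b < (a+1)*m" using ab(2) by simp
    also have "(a+1)*m \<le> m*m" using ab(1) by (intro mult_right_mono) auto
    finally have k: "a*m + b < m*m" .
    have dm: "(a*m+b) div m = a" "(a*m+b) mod m = b" using ab by auto
    from n(2) k obtain x where "x \<in> UU (a*m+b)" "comp_seq f n x \<in> VV (a*m+b)" by blast
    then show ?thesis unfolding UU_def VV_def dm by auto
  qed
  define z where "z a b = (SOME x. dist (c a) x < d \<and> dist (c b) (comp_seq f n x) < d)" for a b
  have z: "dist (c a) (z a b) < d" "dist (c b) (comp_seq f n (z a b)) < d" if "a < m" "b < m" for a b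
    using someI_ex[OF zex[OF that]] unfolding z_def by auto
  have key: "\<exists>M'. M' \<in> prob_measures \<and> induced_comp f n M' \<in> prob_measures \<and>
      (\<forall>g\<in>G. \<bar>(\<integral>x. g x \<partial>M') - (\<integral>x. g x \<partial>\<mu>)\<bar> \<le> e/2) \<and>
      (\<forall>g\<in>G. \<bar>(\<integral>x. g x \<partial>induced_comp f n M') - (\<integral>x. g x \<partial>\<nu>)\<bar> \<le> e/2)"
    if \<mu>: "\<mu> \<in> prob_measures" and \<nu>: "\<nu> \<in> prob_measures" for \<mu> \<nu>
  proof -
    define Z where "Z p = z (cls (fst p)) (cls (snd p))" for p
    have Zm: "Z \<in> measurable (\<mu> \<Otimes>\<^sub>M \<nu>) borel" unfolding Z_def cls_def by (rule Z_meas[OF \<mu> \<nu>])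
    have Pp: "prob_space (\<mu> \<Otimes>\<^sub>M \<nu>)" by (rule pair_prob[OF \<mu> \<nu>])
    define M' where "M' = distr (\<mu> \<Otimes>\<^sub>M \<nu>) borel Z"
    have M'p: "M' \<in> prob_measures" unfolding M'_def prob_measures_def
      using prob_space.prob_space_distr[OF Pp Zm] by simp
    have Ip: "induced_comp f n M' \<in> prob_measures" by (rule induced_prob[OF M'p cont])
    have fstm: "fst \<in> measurable (\<mu> \<Otimes>\<^sub>M \<nu>) borel"
      using measurable_fst measurable_cong_sets[OF refl pm_sets[OF \<mu>]] by blast
    have sndm: "snd \<in> measurable (\<mu> \<Otimes>\<^sub>M \<nu>) borel"
      using measurable_snd measurable_cong_sets[OF refl pm_sets[OF \<nu>]] by blast
    have dz1: "dist (Z p) (fst p) < \<delta>" for p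
    proof -
      have "dist (c (cls (fst p))) (Z p) < d" unfolding Z_def by (rule z(1)) (rule cls(1))+
      moreover have "dist (c (cls (fst p))) (fst p) < d" using cls(2)[of "fst p"] by (simp add: dist_commute)
      moreover have "dist (Z p) (fst p) \<le> dist (c (cls (fst p))) (Z p) + dist (c (cls (fst p))) (fst p)"
        by (rule dist_triangle3)
      ultimately show ?thesis unfolding d_def by simp
    qed
    have dz2: "dist (comp_seq f n (Z p)) (snd p) < \<delta>" for p
    proof -
      have "dist (c (cls (snd p))) (comp_seq f n (Z p)) < d" unfolding Z_def by (rule z(2)) (rule cls(1))+
      moreover have "dist (c (cls (snd p))) (snd p) < d" using cls(2)[of "snd p"] by (simp add: dist_commute)
      moreover have "dist (comp_seq f n (Z p)) (snd p) \<le> dist (c (cls (snd p))) (comp_seq f n (Z p)) + dist (c (cls (snd p))) (snd p)"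
        by (rule dist_triangle3)
      ultimately show ?thesis unfolding d_def by simp
    qed
    have c1: "\<bar>(\<integral>x. g x \<partial>M') - (\<integral>x. g x \<partial>\<mu>)\<bar> \<le> e/2" if g: "g \<in> G" for g
    proof -
      have gc: "continuous_on UNIV g" using Gf(2) g by blast
      obtain B where B: "\<And>x. \<bar>g x\<bar> \<le> B" using cont_bounded[OF cpt gc] by blast
      have "(\<integral>x. g x \<partial>M') = (\<integral>p. g (Z p) \<partial>(\<mu> \<Otimes>\<^sub>M \<nu>))"
        unfolding M'_def by (rule integral_distr[OF Zm borel_measurable_continuous_onI[OF gc]])
      moreover have "(\<integral>x. g x \<partial>\<mu>) = (\<integral>p. g (fst p) \<partial>(\<mu> \<Otimes>\<^sub>M \<nu>))" by (rule integral_fst_pm(1)[OF \<mu> \<nu> gc])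
      moreover have "\<bar>(\<integral>p. g (Z p) \<partial>(\<mu> \<Otimes>\<^sub>M \<nu>)) - (\<integral>p. g (fst p) \<partial>(\<mu> \<Otimes>\<^sub>M \<nu>))\<bar> \<le> e/2"
      proof (rule int_close[OF Pp])
        show "(\<lambda>p. g (Z p)) \<in> borel_measurable (\<mu> \<Otimes>\<^sub>M \<nu>)" by (rule borel_measurable_continuous_on[OF gc Zm])
        show "(\<lambda>p. g (fst p)) \<in> borel_measurable (\<mu> \<Otimes>\<^sub>M \<nu>)" by (rule borel_measurable_continuous_on[OF gc fstm])
        show "\<bar>g (Z p)\<bar> \<le> B" "\<bar>g (fst p)\<bar> \<le> B" for p using B by auto
        show "\<bar>g (Z p) - g (fst p)\<bar> \<le> e/2" for p using \<delta>(2) g dz1[of p] by fastforce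
      qed
      ultimately show ?thesis by simp
    qed
    have c2: "\<bar>(\<integral>x. g x \<partial>induced_comp f n M') - (\<integral>x. g x \<partial>\<nu>)\<bar> \<le> e/2" if g: "g \<in> G" for g
    proof -
      have gc: "continuous_on UNIV g" using Gf(2) g by blast
      have gfc: "continuous_on UNIV (\<lambda>x. g (comp_seq f n x))"
        using continuous_on_compose2[OF gc cont[of n]] by simp
      obtain B where B: "\<And>x. \<bar>g x\<bar> \<le> B" using cont_bounded[OF cpt gc] by blast
      have "(\<integral>x. g x \<partial>induced_comp f n M') = (\<integral>x. g (comp_seq f n x) \<partial>M')"
        by (rule induced_integral[OF M'p cont gc])
      also have "\<dots> = (\<integral>p. g (comp_seq f n (Z p)) \<partial>(\<mu> \<Otimes>\<^sub>M \<nu>))"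
        unfolding M'_def by (rule integral_distr[OF Zm borel_measurable_continuous_onI[OF gfc]])
      finally have i1: "(\<integral>x. g x \<partial>induced_comp f n M') = (\<integral>p. g (comp_seq f n (Z p)) \<partial>(\<mu> \<Otimes>\<^sub>M \<nu>))" .
      moreover have "(\<integral>x. g x \<partial>\<nu>) = (\<integral>p. g (snd p) \<partial>(\<mu> \<Otimes>\<^sub>M \<nu>))" by (rule integral_fst_pm(2)[OF \<mu> \<nu> gc])
      moreover have "\<bar>(\<integral>p. g (comp_seq f n (Z p)) \<partial>(\<mu> \<Otimes>\<^sub>M \<nu>)) - (\<integral>p. g (snd p) \<partial>(\<mu> \<Otimes>\<^sub>M \<nu>))\<bar> \<le> e/2"
      proof (rule int_close[OF Pp])
        show "(\<lambda>p. g (comp_seq f n (Z p))) \<in> borel_measurable (\<mu> \<Otimes>\<^sub>M \<nu>)" by (rule borel_measurable_continuous_on[OF gfc Zm])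
        show "(\<lambda>p. g (snd p)) \<in> borel_measurable (\<mu> \<Otimes>\<^sub>M \<nu>)" by (rule borel_measurable_continuous_on[OF gc sndm])
        show "\<bar>g (comp_seq f n (Z p))\<bar> \<le> B" "\<bar>g (snd p)\<bar> \<le> B" for p using B by auto
        show "\<bar>g (comp_seq f n (Z p)) - g (snd p)\<bar> \<le> e/2" for p using \<delta>(2) g dz2[of p] by fastforce
      qed
      ultimately show ?thesis by simp
    qed
    show ?thesis using M'p Ip c1 c2 by blast
  qed
  obtain M1 where M1: "M1 \<in> prob_measures" "induced_comp f n M1 \<in> prob_measures"
      "\<forall>g\<in>G. \<bar>(\<integral>x. g x \<partial>M1) - (\<integral>x. g x \<partial>\<mu>1)\<bar> \<le> e/2"
      "\<forall>g\<in>G. \<bar>(\<integral>x. g x \<partial>induced_comp f n M1) - (\<integral>x. g x \<partial>\<nu>1)\<bar> \<le> e/2"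
    using key[OF p\<mu>1 p\<nu>1] by blast
  obtain M2 where M2: "M2 \<in> prob_measures" "induced_comp f n M2 \<in> prob_measures"
      "\<forall>g\<in>G. \<bar>(\<integral>x. g x \<partial>M2) - (\<integral>x. g x \<partial>\<mu>2)\<bar> \<le> e/2"
      "\<forall>g\<in>G. \<bar>(\<integral>x. g x \<partial>induced_comp f n M2) - (\<integral>x. g x \<partial>\<nu>2)\<bar> \<le> e/2"
    using key[OF p\<mu>2 p\<nu>2] by blast
  have lt: "x \<le> e/2 \<Longrightarrow> e \<le> e' \<Longrightarrow> x < e'" for x e' using ep(1) by linarith
  have "M1 \<in> A1"
  proof -
    have "\<forall>g\<in>G1. \<bar>(\<integral>x. g x \<partial>M1) - (\<integral>x. g x \<partial>\<mu>1)\<bar> < e1"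
      using M1(3) ep(2) lt unfolding G_def by blast
    then show ?thesis using G1(4) M1(1) by blast
  qed
  moreover have "induced_comp f n M1 \<in> B1"
  proof -
    have "\<forall>g\<in>H1. \<bar>(\<integral>x. g x \<partial>induced_comp f n M1) - (\<integral>x. g x \<partial>\<nu>1)\<bar> < e3"
      using M1(4) ep(4) lt unfolding G_def by blast
    then show ?thesis using H1(4) M1(2) by blast
  qed
  moreover have "M2 \<in> A2"
  proof -
    have "\<forall>g\<in>G2. \<bar>(\<integral>x. g x \<partial>M2) - (\<integral>x. g x \<partial>\<mu>2)\<bar> < e2"
      using M2(3) ep(3) lt unfolding G_def by blast
    then show ?thesis using G2(4) M2(1) by blast
  qed
  moreover have "induced_comp f n M2 \<in> B2"
  proof -
    have "\<forall>g\<in>H2. \<bar>(\<integral>x. g x \<partial>induced_comp f n M2) - (\<integral>x. g x \<partial>\<nu>2)\<bar> < e4"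
      using M2(4) ep(5) lt unfolding G_def by blast
    then show ?thesis using H2(4) M2(2) by blast
  qed
  ultimately show "\<exists>n\<ge>1. induced_comp f n ` A1 \<inter> B1 \<noteq> {} \<and> induced_comp f n ` A2 \<inter> B2 \<noteq> {}"
    using n(1) by blast
qed

theorem theorem3p5:
  fixes f :: "nat \<Rightarrow> 'a::metric_space \<Rightarrow> 'a"
  assumes "compact (UNIV :: 'a set)"
    and "\<And>n. n \<ge> 1 \<Longrightarrow> continuous_on UNIV (f n)"
    and "commutative_seq f"
  shows "(na_weakly_mixing euclidean (comp_seq f)
            \<longleftrightarrow> na_weakly_mixing weak_star_topology (induced_comp f))
       \<and> (na_weakly_mixing weak_star_topology (induced_comp f)
            \<longleftrightarrow> na_transitive weak_star_topology (induced_comp f))"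
proof -
  have cont: "\<And>n. continuous_on UNIV (comp_seq f n)" by (rule comp_seq_cont) (rule assms(2))
  have i12: "na_weakly_mixing euclidean (comp_seq f) \<Longrightarrow> na_weakly_mixing weak_star_topology (induced_comp f)"
    by (rule wm_imp_induced[OF assms(1) cont assms(3)])
  have i23: "na_weakly_mixing weak_star_topology (induced_comp f) \<Longrightarrow> na_transitive weak_star_topology (induced_comp f)"
    by (rule wm_imp_trans)
  have i31: "na_transitive weak_star_topology (induced_comp f) \<Longrightarrow> na_weakly_mixing euclidean (comp_seq f)"
  proof -
    assume tr: "na_transitive weak_star_topology (induced_comp f)"
    show ?thesis
    proof (rule H3_imp_wm[OF cont assms(3)])
      fix U V1 V2 :: "'a set"
      assume "open U" "U \<noteq> {}" "open V1" "V1 \<noteq> {}" "open V2" "V2 \<noteq> {}"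
      then show "\<exists>n\<ge>1. comp_seq f n ` U \<inter> V1 \<noteq> {} \<and> comp_seq f n ` U \<inter> V2 \<noteq> {}"
        by (rule H3[OF cont tr])
    qed
  qed
  show ?thesis using i12 i23 i31 by blast
qed

end
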